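(* $\displaystyle\liminf_{k\to\infty}\frac{\Gamma(k)}{k}=\frac32.$
   Context: The Thue–Morse word is $\mathbf t=\mathbf t_1\mathbf t_2\cdots$ where $\mathbf t_i\in\{0,1\}$ has the parity of the number of $1$'s in the binary expansion of $i-1$. For positive integers $\alpha\le\beta$, $\langle\alpha,\beta\rangle=\mathbf t_\alpha\cdots\mathbf t_\beta$. A $k$-anti-power is a word $w_1\cdots w_k$ with $w_1,\dots,w_k$ pairwise distinct words of equal length. $\mathcal F(k)$ is the set of odd positive integers $m$ such that $\langle 1,km\rangle$ is a $k$-anti-power. For $k\ge3$, $\Gamma(k)=\sup\big((2\mathbb Z^+-1)\setminus\mathcal F(k)\big)$, which is a finite odd positive integer. *)

theory Defs
  imports "HOL-Library.Liminf_Limsup" "HOL-Library.Extended_Real"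
begin

fun bin_ones :: "nat \<Rightarrow> nat" where
  "bin_ones n = (if n = 0 then 0 else n mod 2 + bin_ones (n div 2))"

declare bin_ones.simps [simp del]

text \<open>Thue--Morse word, 1-indexed: tm i is the parity of the number of 1s in
  the binary expansion of i - 1 (for i \<ge> 1).\<close>
definition tm :: "nat \<Rightarrow> nat" where
  "tm i = bin_ones (i - 1) mod 2"

definition tm_factor :: "nat \<Rightarrow> nat \<Rightarrow> nat list" where
  "tm_factor \<alpha> \<beta> = map tm [\<alpha>..<Suc \<beta>]"

definition anti_power :: "nat \<Rightarrow> 'a list \<Rightarrow> bool" where
  "anti_power k w \<longleftrightarrow> (\<exists>m. length w = k * m \<and>
      distinct (map (\<lambda>j. take m (drop (j * m) w)) [0..<k]))"

definition F :: "nat \<Rightarrow> nat set" where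
  "F k = {m. odd m \<and> 0 < m \<and> anti_power k (tm_factor 1 (k * m))}"

text \<open>Gamma k = sup of the odd positive integers not in F k (finite for k \<ge> 3).\<close>
definition Gamma :: "nat \<Rightarrow> nat" where
  "Gamma k = Sup {m. odd m \<and> 0 < m \<and> m \<notin> F k}"

end

theory Submission imports Defs begin

definition sb :: "nat \<Rightarrow> nat" where "sb n = bin_ones n mod 2"
definition feq :: "nat \<Rightarrow> nat \<Rightarrow> nat \<Rightarrow> bool" where
  "feq p q L \<longleftrightarrow> (\<forall>t<L. sb (p+t) = sb (q+t))"

lemma bo_double: "bin_ones (2*n) = bin_ones n"
  by (cases "n = 0") (simp_all add: bin_ones.simps[of "2*n"])

lemma bo_double1: "bin_ones (2*n+1) = Suc (bin_ones n)"
  by (subst bin_ones.simps) simp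

lemma sb_even: "sb (2*n) = sb n" by (simp add: sb_def bo_double)
lemma sb_odd: "sb (2*n+1) = 1 - sb n"
  unfolding sb_def using bo_double1[of n] by presburger
lemma sb_ev': "n = 2*x \<Longrightarrow> sb n = sb x" using sb_even by simp
lemma sb_od': "n = 2*x+1 \<Longrightarrow> sb n = 1 - sb x" using sb_odd by simp
lemma sb_le: "sb n \<le> 1" by (simp add: sb_def)

lemma bo_split: "v < 2^R \<Longrightarrow> bin_ones (x*2^R + v) = bin_ones x + bin_ones v"
proof (induction R arbitrary: v)
  case 0 thus ?case by (simp add: bin_ones.simps[of 0])
next
  case (Suc R)
  have v: "v = 2*(v div 2) + v mod 2" by simp
  have lt: "v div 2 < 2^R" using Suc.prems by simp
  have e: "x*2^Suc R + v = 2*(x*2^R + v div 2) + v mod 2" by simp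
  show ?case
  proof (cases "v mod 2 = 0")
    case True
    then have "x*2^Suc R + v = 2*(x*2^R + v div 2)" "v = 2*(v div 2)" using e v by simp_all
    then show ?thesis using Suc.IH[OF lt] by (metis bo_double)
  next
    case False
    then have "v mod 2 = 1" by simp
    then have "x*2^Suc R + v = 2*(x*2^R + v div 2)+1" "v = 2*(v div 2)+1" using e v by simp_all
    then show ?thesis using Suc.IH[OF lt] by (metis bo_double1 add_Suc_right)
  qed
qed

lemma sb_split: "v < 2^R \<Longrightarrow> sb (x*2^R + v) = (bin_ones x + bin_ones v) mod 2"
  by (simp add: sb_def bo_split)

lemma no_three: "\<not> (sb z = sb (z+1) \<and> sb (z+1) = sb (z+2))"
proof (cases "even z")
  case True then obtain w where w: "z = 2*w" by blast
  have "sb (z+1) = 1 - sb z" using sb_even[of w] sb_odd[of w] w by simp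
  then have "sb z \<noteq> sb (z+1)" using sb_le[of z] by arith
  then show ?thesis by blast
next
  case False then obtain w where w: "z = 2*w+1" using oddE by blast
  have e: "z+1 = 2*(w+1)" "z+2 = 2*(w+1)+1" using w by simp_all
  have "sb (z+2) = 1 - sb (z+1)" unfolding e using sb_even[of "w+1"] sb_odd[of "w+1"] by simp
  then have "sb (z+1) \<noteq> sb (z+2)" using sb_le[of "z+1"] by arith
  then show ?thesis by blast
qed

lemma rec_base:
  assumes "feq p q 4" shows "p mod 2 = q mod 2"
proof (rule ccontr)
  assume ne: "p mod 2 \<noteq> q mod 2"
  have key: "False" if f: "feq a b 4" and a: "even a" and b: "odd b" for a b
  proof -
    obtain x where x: "a = 2*x" using a by blast
    obtain y where y: "b = 2*y+1" using b oddE by blast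
    have a1: "a+1 = 2*x+1" "a+2 = 2*(x+1)" "a+3 = 2*(x+1)+1" using x by simp_all
    have b1: "b+1 = 2*(y+1)" "b+2 = 2*(y+1)+1" "b+3 = 2*(y+2)" using y by simp_all
    have e: "sb (a+0) = sb (b+0)" "sb (a+1) = sb (b+1)" "sb (a+2) = sb (b+2)" "sb (a+3) = sb (b+3)"
      using f[unfolded feq_def, rule_format, of 0] f[unfolded feq_def, rule_format, of 1]
        f[unfolded feq_def, rule_format, of 2] f[unfolded feq_def, rule_format, of 3] by auto
    have ea: "sb (a+0) = sb x" "sb (a+1) = 1 - sb x" "sb (a+2) = sb (x+1)" "sb (a+3) = 1 - sb (x+1)"
      by (rule sb_ev' sb_od'; simp add: x)+
    have eb: "sb (b+0) = 1 - sb y" "sb (b+1) = sb (y+1)" "sb (b+2) = 1 - sb (y+1)" "sb (b+3) = sb (y+2)"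
      by (rule sb_ev' sb_od'; simp add: y)+
    have "sb y = sb (y+1) \<and> sb (y+1) = sb (y+2)"
      using e ea eb sb_le[of x] sb_le[of "x+1"] sb_le[of y] sb_le[of "y+1"] sb_le[of "y+2"]
      by arith
    then show False using no_three[of y] by (simp add: add.assoc)
  qed
  have "feq q p 4" using assms unfolding feq_def by auto
  show False
  proof (cases "even p")
    case True then have "odd q" using ne by presburger
    then show False using key[OF assms True] by blast
  next
    case False then have "even q" using ne by presburger
    then show False using key[OF \<open>feq q p 4\<close> _ False] by blast
  qed
qed

lemma feq_mono: "feq p q L \<Longrightarrow> L' \<le> L \<Longrightarrow> feq p q L'"
  unfolding feq_def by auto

lemma halve:
  assumes f: "feq p q L" and e: "p mod 2 = q mod 2"
  shows "feq (p div 2) (q div 2) ((L+1) div 2)"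
  unfolding feq_def
proof (intro allI impI)
  fix t assume t: "t < (L+1) div 2"
  then have t2: "2*t < L" by linarith
  have fe: "sb (p + 2*t) = sb (q + 2*t)" using f t2 unfolding feq_def by blast
  show "sb (p div 2 + t) = sb (q div 2 + t)"
  proof (cases "p mod 2 = 0")
    case True
    then have "p + 2*t = 2*(p div 2 + t)" "q + 2*t = 2*(q div 2 + t)" using e by auto
    then show ?thesis using fe sb_ev' by metis
  next
    case False
    then have "p mod 2 = 1" "q mod 2 = 1" using e by auto
    then have "p + 2*t = 2*(p div 2 + t) + 1" "q + 2*t = 2*(q div 2 + t) + 1" by presburger+
    then have "1 - sb (p div 2 + t) = 1 - sb (q div 2 + t)" using fe sb_od' by metis
    then show ?thesis using sb_le[of "p div 2 + t"] sb_le[of "q div 2 + t"] by arith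
  qed
qed

lemma recog: "feq p q L \<Longrightarrow> 3*2^r + 1 \<le> L \<Longrightarrow> p mod 2^(r+1) = q mod 2^(r+1)"
proof (induction r arbitrary: p q L)
  case 0
  then have "feq p q 4" using feq_mono by simp
  then show ?case using rec_base by simp
next
  case (Suc r)
  have "(4::nat) \<le> 3*2^Suc r + 1" by simp
  then have "feq p q 4" using Suc.prems feq_mono by (meson order_trans)
  then have e: "p mod 2 = q mod 2" using rec_base by blast
  have h: "feq (p div 2) (q div 2) ((L+1) div 2)" using halve[OF Suc.prems(1) e] .
  have "3*2^r + 1 \<le> (L+1) div 2" using Suc.prems(2) by simp
  then have ih: "(p div 2) mod 2^(r+1) = (q div 2) mod 2^(r+1)" using Suc.IH[OF h] by blast
  have "p mod 2^(Suc r + 1) = 2 * ((p div 2) mod 2^(r+1)) + p mod 2"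
    using mod_mult2_eq[of p 2 "2^(r+1)"] by (simp add: mult.commute)
  moreover have "q mod 2^(Suc r + 1) = 2 * ((q div 2) mod 2^(r+1)) + q mod 2"
    using mod_mult2_eq[of q 2 "2^(r+1)"] by (simp add: mult.commute)
  ultimately show ?case using ih e by simp
qed

lemma tm_sb: "tm (Suc n) = sb n" by (simp add: tm_def sb_def)

lemma tmf: "tm_factor 1 N = map sb [0..<N]"
proof -
  have "tm_factor 1 N = map tm (map Suc [0..<N])" unfolding tm_factor_def
    by (simp add: map_Suc_upt)
  also have "\<dots> = map sb [0..<N]" by (simp add: tm_sb)
  finally show ?thesis .
qed

lemma blk: "j < k \<Longrightarrow> take m (drop (j*m) (map sb [0..<k*m])) = map sb [j*m..<j*m+m]"
proof -
  assume "j < k"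
  then have "j*m + m \<le> k*m" by (metis Suc_leI mult_Suc mult_le_mono1 add.commute)
  then show ?thesis by (simp add: drop_map take_map)
qed

lemma blk_eq: "(map sb [a..<a+m] = map sb [b..<b+m]) \<longleftrightarrow> feq a b m"
  unfolding feq_def by (auto simp: list_eq_iff_nth_eq)

lemma notF:
  assumes "i < j" "j < k" "feq (i*m) (j*m) m" shows "m \<notin> F k"
proof
  assume "m \<in> F k"
  then have ap: "anti_power k (map sb [0..<k*m])" unfolding F_def tmf by simp
  then obtain m' where l: "length (map sb [0..<k*m]) = k*m'"
    and d: "distinct (map (\<lambda>j. take m' (drop (j*m') (map sb [0..<k*m]))) [0..<k])"
    unfolding anti_power_def by blast
  have "k > 0" using assms by simp
  then have "m' = m" using l by simp
  then have d2: "distinct (map (\<lambda>j. take m (drop (j*m) (map sb [0..<k*m]))) [0..<k])" using d by simp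
  have inj: "inj_on (\<lambda>j. take m (drop (j*m) (map sb [0..<k*m]))) {0..<k}"
    using d2 by (simp add: distinct_map)
  have "map sb [i*m..<i*m+m] = map sb [j*m..<j*m+m]" using assms(3) blk_eq by blast
  then have eq: "take m (drop (i*m) (map sb [0..<k*m])) = take m (drop (j*m) (map sb [0..<k*m]))"
    using blk[of i k m] blk[of j k m] assms by simp
  have "i \<in> {0..<k}" "j \<in> {0..<k}" using assms by auto
  then have "i = j" using inj_onD[OF inj eq] by blast
  then show False using assms by simp
qed

lemma inF:
  assumes "odd m" "0 < m" "\<And>i j. i < j \<Longrightarrow> j < k \<Longrightarrow> \<not> feq (i*m) (j*m) m"
  shows "m \<in> F k"
proof -
  have "inj_on (\<lambda>j. take m (drop (j*m) (map sb [0..<k*m]))) {0..<k}"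
  proof (rule inj_onI)
    fix i j assume i: "i \<in> {0..<k}" and j: "j \<in> {0..<k}"
      and e: "take m (drop (i*m) (map sb [0..<k*m])) = take m (drop (j*m) (map sb [0..<k*m]))"
    have "map sb [i*m..<i*m+m] = map sb [j*m..<j*m+m]" using e blk[of i k m] blk[of j k m] i j by simp
    then have "feq (i*m) (j*m) m" using blk_eq by blast
    moreover have "feq (j*m) (i*m) m" using calculation unfolding feq_def by auto
    ultimately show "i = j" using assms(3) i j by (metis atLeastLessThan_iff linorder_neqE_nat)
  qed
  then have "anti_power k (map sb [0..<k*m])"
    unfolding anti_power_def by (intro exI[of _ m]) (simp add: distinct_map)
  then show ?thesis using assms unfolding F_def tmf by simp
qed

lemma bigF:
  assumes k: "k \<le> 2^(r+1)" and m: "odd m" "3*2^r + 1 \<le> m"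
  shows "m \<in> F k"
proof (rule inF)
  show "odd m" "0 < m" using m by auto
  fix i j assume ij: "i < j" "j < k"
  show "\<not> feq (i*m) (j*m) m"
  proof
    assume "feq (i*m) (j*m) m"
    then have eq: "(i*m) mod 2^(r+1) = (j*m) mod 2^(r+1)" using recog m(2) by blast
    have le: "i*m \<le> j*m" using ij by simp
    have "2^(r+1) dvd j*m - i*m" by (rule iffD1[OF mod_eq_dvd_iff_nat[OF le] eq[symmetric]])
    then have dv: "2^(r+1) dvd (j - i) * m" by (simp add: diff_mult_distrib)
    have "coprime ((2::nat)^(r+1)) m" using m by simp
    then have "2^(r+1) dvd (j - i)" using dv coprime_dvd_mult_left_iff by blast
    moreover have "0 < j - i" "j - i < 2^(r+1)" using ij k by auto
    ultimately show False using nat_dvd_not_less by blast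
  qed
qed

lemma bo_nums: "bin_ones 0 = 0" "bin_ones 1 = 1" "bin_ones 2 = 1" "bin_ones 3 = 2" "bin_ones 4 = 1"
  "bin_ones 5 = 2" "bin_ones 6 = 2" "bin_ones 10 = 2" "bin_ones 11 = 3" "bin_ones 12 = 2"
  "bin_ones 13 = 3"
  by (simp_all add: bin_ones.simps)

lemma block_lemma:
  assumes uL: "u + L \<le> 3*2^R" and ab: "\<And>c. c < 3 \<Longrightarrow> sb (a+c) = sb (b+c)"
  shows "feq (a*2^R+u) (b*2^R+u) L"
  unfolding feq_def
proof (intro allI impI)
  fix t assume t: "t < L"
  define c where "c = (u+t) div 2^R"
  define v where "v = (u+t) mod 2^R"
  have v: "v < 2^R" unfolding v_def by simp
  have "u + t < 3*2^R" using uL t by linarith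
  then have c3: "c < 3" unfolding c_def by (simp add: less_mult_imp_div_less)
  have ut: "u + t = c*2^R + v" unfolding c_def v_def by (metis div_mult_mod_eq)
  have e1: "a*2^R+u+t = (a+c)*2^R + v" using ut by (simp add: algebra_simps)
  have e2: "b*2^R+u+t = (b+c)*2^R + v" using ut by (simp add: algebra_simps)
  have "sb (a*2^R+u+t) = (bin_ones (a+c) + bin_ones v) mod 2" using e1 sb_split[OF v] by simp
  also have "\<dots> = (sb (a+c) + bin_ones v) mod 2" by (simp add: sb_def mod_add_left_eq)
  also have "\<dots> = (sb (b+c) + bin_ones v) mod 2" using ab[OF c3] by simp
  also have "\<dots> = (bin_ones (b+c) + bin_ones v) mod 2" by (simp add: sb_def mod_add_left_eq)
  also have "\<dots> = sb (b*2^R+u+t)" using e2 sb_split[OF v] by simp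
  finally show "sb (a*2^R+u+t) = sb (b*2^R+u+t)" .
qed

lemma three_cases: "(c::nat) < 3 \<Longrightarrow> c = 0 \<or> c = 1 \<or> c = 2" by auto

lemma fam_even:
  assumes h: "3 \<le> h" and t: "t = (2::nat)^h" and m: "m + t = 3*t*t + 1"
  shows "feq ((t+1)*m) ((t+1 + t*t)*m) m"
proof -
  have "(2::nat)^3 \<le> 2^h" using h by (rule power_increasing) simp
  then have t8: "8 \<le> t" using t by simp
  have P: "(2::nat)^(h+h) = t*t" using t by (simp add: power_add)
  have im: "(t+1)*m = (3*t+2)*(t*t) + 1"
  proof -
    have "int (m + t) = int (3*t*t + 1)" using m by simp
    then have hm: "int m = 3*int t*int t + 1 - int t" by simp
    have "int ((t+1)*m) = int ((3*t+2)*(t*t) + 1)" by (simp add: hm algebra_simps)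
    then show ?thesis by linarith
  qed
  have jm: "(t+1 + t*t)*m = (3*t+2+m)*(t*t) + 1" using im by (simp add: algebra_simps)
  have "feq ((3*t+2)*2^(h+h) + 1) ((3*t+2+m)*2^(h+h) + 1) m"
  proof (rule block_lemma)
    show "1 + m \<le> 3*2^(h+h)" using P m t8 by simp
    fix c :: nat assume c: "c < 3"
    have lt: "2 + c < 2^h" "3 + c < 2^h" using c t8 t by auto
    have "sb (3*t+2+c) = sb (3*2^h + (2+c))" using t by (simp add: add.assoc)
    also have "\<dots> = (2 + bin_ones (2+c)) mod 2" using sb_split[OF lt(1), of 3] bo_nums by simp
    finally have L: "sb (3*t+2+c) = (2 + bin_ones (2+c)) mod 2" .
    have b: "3*t+2+m = (3*t+2)*t + 3" using m by (simp add: algebra_simps)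
    have "bin_ones (3*t+2) = 3" using sb_split bo_split[of 2 h 3] bo_nums t t8 by simp
    moreover have e: "3*t+2+m+c = (3*t+2)*2^h + (3+c)" using b t by simp
    have "sb (3*t+2+m+c) = (bin_ones (3*t+2) + bin_ones (3+c)) mod 2"
      unfolding e by (rule sb_split[OF lt(2)])
    ultimately have "sb (3*t+2+m+c) = (3 + bin_ones (3+c)) mod 2" by simp
    moreover have "(2 + bin_ones (2+c)) mod 2 = (3 + bin_ones (3+c)) mod 2"
      using three_cases[OF c] by (elim disjE) (simp_all add: bo_nums)
    ultimately show "sb (3*t+2+c) = sb (3*t+2+m+c)" using L by simp
  qed
  then show ?thesis using im jm P by simp
qed

lemma fam_odd:
  assumes h: "4 \<le> h" and t: "t = (2::nat)^h" and m: "m + t = 6*t*t + 1"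
  shows "feq ((4*t+4)*m) ((4*t+4 + 2*(t*t))*m) m"
proof -
  have "(2::nat)^4 \<le> 2^h" using h by (rule power_increasing) simp
  then have t16: "16 \<le> t" using t by simp
  have P: "(2::nat)^(Suc (h+h)) = 2*(t*t)" using t by (simp add: power_add)
  have im: "(4*t+4)*m = (12*t+10)*(2*(t*t)) + 4"
  proof -
    have "int (m + t) = int (6*t*t + 1)" using m by simp
    then have hm: "int m = 6*int t*int t + 1 - int t" by simp
    have "int ((4*t+4)*m) = int ((12*t+10)*(2*(t*t)) + 4)" by (simp add: hm algebra_simps)
    then show ?thesis by linarith
  qed
  have jm: "(4*t+4 + 2*(t*t))*m = (12*t+10+m)*(2*(t*t)) + 4" using im by (simp add: algebra_simps)
  have "feq ((12*t+10)*2^(Suc (h+h)) + 4) ((12*t+10+m)*2^(Suc (h+h)) + 4) m"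
  proof (rule block_lemma)
    show "4 + m \<le> 3*2^(Suc (h+h))" using P m t16 by simp
    fix c :: nat assume c: "c < 3"
    have lt: "10 + c < 2^h" "11 + c < 2^h" "11 < (2::nat)^h" using c t16 t by auto
    have ea: "12*t+10+c = 12*2^h + (10+c)" using t by simp
    have L: "sb (12*t+10+c) = (bin_ones 12 + bin_ones (10+c)) mod 2"
      unfolding ea by (rule sb_split[OF lt(1)])
    have b: "12*t+10+m = (6*t+11)*t + 11" using m by (simp add: algebra_simps)
    have "bin_ones (6*t+11) = 5" using bo_split[OF lt(3), of 6] bo_nums t by simp
    moreover have e: "12*t+10+m+c = (6*t+11)*2^h + (11+c)" using b t by simp
    have "sb (12*t+10+m+c) = (bin_ones (6*t+11) + bin_ones (11+c)) mod 2"
      unfolding e by (rule sb_split[OF lt(2)])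
    ultimately have "sb (12*t+10+m+c) = (5 + bin_ones (11+c)) mod 2" by simp
    moreover have "(2 + bin_ones (10+c)) mod 2 = (5 + bin_ones (11+c)) mod 2"
      using three_cases[OF c] by (elim disjE) (simp_all add: bo_nums)
    ultimately show "sb (12*t+10+c) = sb (12*t+10+m+c)" using L bo_nums by simp
  qed
  then show ?thesis using im jm P by simp
qed

definition mR :: "nat \<Rightarrow> nat" where "mR R = 3*2^R + 1 - 2^(R div 2)"
definition iR :: "nat \<Rightarrow> nat" where
  "iR R = (if even R then 2^(R div 2) + 1 else 4*2^(R div 2) + 4)"

lemma fam:
  assumes "10 \<le> R"
  shows "feq (iR R * mR R) ((iR R + 2^R) * mR R) (mR R)"
proof -
  define h where "h = R div 2"
  define t where "t = (2::nat)^h"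
  have t1: "1 \<le> t" unfolding t_def by simp
  then have tt: "t \<le> t*t" by simp
  show ?thesis
  proof (cases "even R")
    case True
    then have R: "R = h + h" unfolding h_def by auto
    have P: "(2::nat)^R = t*t" unfolding R t_def by (simp add: power_add)
    have m: "mR R + t = 3*t*t + 1" unfolding mR_def h_def[symmetric] t_def[symmetric] P
      using tt by (simp add: mult.assoc; linarith)
    have "feq ((t+1)*mR R) ((t+1 + t*t)*mR R) (mR R)"
      by (rule fam_even[OF _ t_def m]) (use assms R in auto)
    then show ?thesis unfolding iR_def using True P by (simp add: h_def t_def)
  next
    case False
    then have R: "R = Suc (h + h)" unfolding h_def by presburger
    have P: "(2::nat)^R = 2*(t*t)" unfolding R t_def by (simp add: power_add)
    have m: "mR R + t = 6*t*t + 1" unfolding mR_def h_def[symmetric] t_def[symmetric] P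
      using tt by (simp add: mult.assoc; linarith)
    have "feq ((4*t+4)*mR R) ((4*t+4 + 2*(t*t))*mR R) (mR R)"
      by (rule fam_odd[OF _ t_def m]) (use assms R in auto)
    then show ?thesis unfolding iR_def using False P by (simp add: h_def t_def)
  qed
qed

lemma odd_aux: "even (a::nat) \<Longrightarrow> even b \<Longrightarrow> b \<le> a \<Longrightarrow> odd (3*a+1-b)" by presburger

lemma odd_mR: "2 \<le> R \<Longrightarrow> odd (mR R)"
proof -
  assume R: "2 \<le> R"
  have "even ((2::nat)^R)" using R by simp
  moreover have "even ((2::nat)^(R div 2))" using R by simp
  moreover have "(2::nat)^(R div 2) \<le> 2^R" by (rule power_increasing) auto
  ultimately show ?thesis unfolding mR_def by (rule odd_aux)
qed

lemma Sfin: "0 < k \<Longrightarrow> {m. odd m \<and> 0 < m \<and> m \<notin> F k} \<subseteq> {..3*2^k}"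
proof
  fix m assume k: "0 < k" and "m \<in> {m. odd m \<and> 0 < m \<and> m \<notin> F k}"
  then have m: "odd m" "m \<notin> F k" by auto
  have a: "k < 2^k" by (rule less_exp)
  have "(2::nat)^(k+1) = 2*2^k" by simp
  then have "k \<le> 2^(k+1)" using a by linarith
  then have "\<not> 3*2^k + 1 \<le> m" using bigF[of k k m] m by blast
  then show "m \<in> {..3*2^k}" by simp
qed

lemma Gamma_ge: "0 < k \<Longrightarrow> odd m \<Longrightarrow> m \<notin> F k \<Longrightarrow> m \<le> Gamma k"
  unfolding Gamma_def
  by (rule cSup_upper) (auto intro: bdd_above_mono[OF _ Sfin] simp: odd_pos)

lemma Gamma_pow: "1 \<le> n \<Longrightarrow> Gamma (2^(n+1)) \<le> 3*2^n"
  unfolding Gamma_def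
proof (rule cSup_least)
  assume n: "1 \<le> n"
  have "(2::nat)^1 < 2^(n+1)" using n by (intro power_strict_increasing) auto
  then have k: "2 < (2::nat)^(n+1)" by simp
  have b1: "bin_ones (Suc 0) = 1" using bo_nums(2) by simp
  have "feq (1*1) (2*1) 1" unfolding feq_def by (simp add: sb_def bo_nums b1)
  then have "1 \<notin> F (2^(n+1))" using notF[of 1 2 "2^(n+1)" 1] k by simp
  then show "{m. odd m \<and> 0 < m \<and> m \<notin> F (2^(n+1))} \<noteq> {}" by (intro ex_in_conv[THEN iffD1] exI[of _ 1]) simp
  fix m assume "m \<in> {m. odd m \<and> 0 < m \<and> m \<notin> F (2^(n+1))}"
  then have m: "odd m" "m \<notin> F (2^(n+1))" by auto
  then show "m \<le> 3*2^n" using bigF[of "2^(n+1)" n m] by force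
qed

lemma low: "10 \<le> R \<Longrightarrow> iR R + 2^R < k \<Longrightarrow> mR R \<le> Gamma k"
  using notF[of "iR R" "iR R + 2^R" k "mR R"] fam[of R] odd_mR[of R] Gamma_ge[of k "mR R"]
  by simp

lemma iR_le: "iR R \<le> 4*2^(R div 2) + 4" unfolding iR_def by auto

lemma key_bound:
  assumes R: "11 \<le> R" and k: "2^R < k" "k \<le> 2^(R+1)"
  shows "3*k \<le> 2*Gamma k + 26*2^(R div 2)"
proof -
  define T where "T = (2::nat)^(R div 2)"
  define Q where "Q = (2::nat)^(R-1)"
  have "(2::nat)^R = 2^(Suc (R-1))" using R by (simp del: power_Suc)
  then have PQ: "(2::nat)^R = 2*Q" unfolding Q_def by simp
  have T1: "1 \<le> T" unfolding T_def by simp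
  have TR: "T \<le> 2^R" unfolding T_def by (rule power_increasing) auto
  show ?thesis
  proof (cases "iR R + 2^R < k")
    case True
    have "mR R \<le> Gamma k" using low[OF _ True] R by simp
    then show ?thesis using k TR unfolding mR_def T_def[symmetric] by simp
  next
    case False
    define T' where "T' = (2::nat)^((R-1) div 2)"
    have T'T: "T' \<le> T" unfolding T'_def T_def by (rule power_increasing) auto
    have "(2::nat)^((R-1) div 2 + 3) \<le> 2^(R-1)" using R by (intro power_increasing) auto
    then have T'Q: "8*T' \<le> Q" unfolding T'_def Q_def by (simp add: power_add)
    have "1 \<le> (R-1) div 2" using R by simp
    then have "(2::nat)^1 \<le> 2^((R-1) div 2)" by (rule power_increasing) simp
    then have T'2: "2 \<le> T'" unfolding T'_def by simp
    have "iR (R-1) \<le> 4*T' + 4" unfolding T'_def by (rule iR_le)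
    then have "iR (R-1) + 2^(R-1) < k" using k PQ T'Q T'2 unfolding Q_def by linarith
    then have "mR (R-1) \<le> Gamma k" using low[of "R-1" k] R by simp
    moreover have "T' \<le> 2^(R-1)" unfolding T'_def by (rule power_increasing) auto
    ultimately have G: "3*Q + 1 - T' \<le> Gamma k" unfolding mR_def T'_def[symmetric] Q_def by simp
    have "k \<le> 2^R + 4*T + 4" using False iR_le[of R] unfolding T_def by linarith
    then show ?thesis using G PQ T'T T1 T'Q unfolding T_def[symmetric] by linarith
  qed
qed

lemma lower_ev:
  assumes e: "0 < (\<epsilon>::real)"
  shows "eventually (\<lambda>k. 3/2 - \<epsilon> < real (Gamma k) / real k) sequentially"
proof -
  obtain K :: nat where K: "169 / \<epsilon>^2 < real K" using reals_Archimedean2 by blast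
  show ?thesis unfolding eventually_sequentially
  proof (intro exI[of _ "max (2^12+1) K"] allI impI)
    fix k assume kN: "max (2^12+1) K \<le> k"
    then have "4097 \<le> k" by simp
    then have k1: "1 \<le> k - 1" by arith
    obtain R where R: "2^R \<le> k - 1" "k - 1 < 2^(R+1)" using ex_power_ivl1[of 2 "k-1"] k1 by auto
    have Rk: "2^R < k" "k \<le> 2^(R+1)" using R k1 by auto
    have R11: "11 \<le> R"
    proof (rule ccontr)
      assume "\<not> 11 \<le> R"
      then have "(2::nat)^(R+1) \<le> 2^12" by (intro power_increasing) auto
      then show False using Rk kN by simp
    qed
    define T where "T = (2::nat)^(R div 2)"
    have kb: "3*k \<le> 2*Gamma k + 26*T" using key_bound[OF R11 Rk] unfolding T_def .
    have "T*T = 2^(R div 2 + R div 2)" unfolding T_def by (simp add: power_add)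
    also have "\<dots> \<le> 2^R" by (rule power_increasing) auto
    finally have TT: "T*T < k" using Rk by linarith
    define x where "x = real k"
    define g where "g = real (Gamma k)"
    define \<tau> where "\<tau> = real T"
    have xpos: "0 < x" unfolding x_def using Rk by simp
    have kb': "3*x \<le> 2*g + 26*\<tau>" unfolding x_def g_def \<tau>_def using kb by linarith
    have TT': "\<tau>*\<tau> < x" unfolding x_def \<tau>_def using TT by (metis of_nat_less_iff of_nat_mult)
    have xK: "169/\<epsilon>^2 < x" unfolding x_def using K kN by linarith
    then have "169 < \<epsilon>^2 * x" using e by (simp add: field_simps)
    then have h1: "169 * x < (\<epsilon>*x)^2" using xpos by (simp add: power2_eq_square algebra_simps)
    have "(13*\<tau>)^2 = 169*(\<tau>*\<tau>)" by (simp add: power2_eq_square)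
    also have "\<dots> \<le> 169 * x" using TT' by simp
    finally have "(13*\<tau>)^2 < (\<epsilon>*x)^2" using h1 by linarith
    then have "13*\<tau> < \<epsilon>*x" by (rule power2_less_imp_less) (use e xpos in simp)
    then have "(3/2 - \<epsilon>) * x < g" using kb' by (simp add: algebra_simps)
    then show "3/2 - \<epsilon> < real (Gamma k) / real k"
      using xpos unfolding x_def g_def by (simp add: field_simps)
  qed
qed

theorem theorem2:
  shows "liminf (\<lambda>k. ereal (real (Gamma k) / real k)) = ereal (3 / 2)"
proof (rule antisym)
  define X where "X = (\<lambda>k. ereal (real (Gamma k) / real k))"
  define r where "r = (\<lambda>n::nat. (2::nat)^(n+2))"
  have sm: "strict_mono r" unfolding r_def strict_mono_Suc_iff by simp
  have "\<forall>\<^sub>F n in sequentially. (X \<circ> r) n \<le> ereal (3/2)"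
  proof (intro always_eventually allI)
    fix n
    have G: "Gamma (2^((n+1)+1)) \<le> 3*2^(n+1)" by (rule Gamma_pow) simp
    have G': "Gamma (r n) \<le> 3*2^(n+1)" using G unfolding r_def by simp
    have "real (Gamma (r n)) \<le> real (3*2^(n+1))" using G' by (rule of_nat_mono)
    also have "\<dots> = 3/2 * real (r n)" unfolding r_def by (simp add: power_add)
    finally have "real (Gamma (r n)) \<le> 3/2 * real (r n)" .
    then have "real (Gamma (r n)) / real (r n) \<le> 3/2"
      unfolding r_def by (simp add: field_simps)
    then show "(X \<circ> r) n \<le> ereal (3/2)" unfolding X_def by simp
  qed
  then have "liminf (X \<circ> r) \<le> ereal (3/2)" by (intro Liminf_le) simp_all
  then show "liminf X \<le> ereal (3/2)" using liminf_subseq_mono[OF sm, of X] by simp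
  show "ereal (3/2) \<le> liminf X"
    unfolding le_Liminf_iff
  proof (intro allI impI)
    fix y assume y: "y < ereal (3/2)"
    show "\<forall>\<^sub>F k in sequentially. y < X k"
    proof (cases y)
      case (real r)
      then have "0 < 3/2 - r" using y by simp
      from lower_ev[OF this] show ?thesis
        by eventually_elim (simp add: X_def real)
    next
      case PInf then show ?thesis using y by simp
    next
      case MInf then show ?thesis by (simp add: X_def)
    qed
  qed
qed

end
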